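(* Let $ABC$ be a non-equilateral triangle with semiperimeter $s$, circumradius $R$, inradius $r$, circumcenter $O$, centroid $G$ and incenter $I$. Then $$\cos\widehat{GOI}=\frac{6R^2-s^2-r^2+2Rr}{2\sqrt{9R^2-2s^2+2r^2+8Rr}\cdot\sqrt{R^2-2Rr}}.$$
   Context: The centroid $G$ has barycentric coordinates $1:1:1$ and the incenter $I$ has barycentric coordinates $a:b:c$, where $a=BC$, $b=CA$, $c=AB$. *)

theory Defs
  imports "HOL-Analysis.Analysis"
begin

definition vangle :: "'a::real_inner \<Rightarrow> 'a \<Rightarrow> real" where
  "vangle u v = arccos (inner u v / (norm u * norm v))"

definition centroid :: "real^2 \<Rightarrow> real^2 \<Rightarrow> real^2 \<Rightarrow> real^2" where
  "centroid A B C = (1/3) *\<^sub>R (A + B + C)"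

text \<open>Incenter via barycentric coordinates a:b:c.\<close>
definition incenter :: "real^2 \<Rightarrow> real^2 \<Rightarrow> real^2 \<Rightarrow> real^2" where
  "incenter A B C = (1 / (dist B C + dist C A + dist A B)) *\<^sub>R
      (dist B C *\<^sub>R A + dist C A *\<^sub>R B + dist A B *\<^sub>R C)"

definition circumcenter :: "real^2 \<Rightarrow> real^2 \<Rightarrow> real^2 \<Rightarrow> real^2" where
  "circumcenter A B C = (THE P. dist P A = dist P B \<and> dist P B = dist P C)"

definition circumradius :: "real^2 \<Rightarrow> real^2 \<Rightarrow> real^2 \<Rightarrow> real" where
  "circumradius A B C = dist (circumcenter A B C) A"

definition inradius :: "real^2 \<Rightarrow> real^2 \<Rightarrow> real^2 \<Rightarrow> real" where
  "inradius A B C = infdist (incenter A B C) (affine hull {B, C})"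

definition semiperimeter :: "real^2 \<Rightarrow> real^2 \<Rightarrow> real^2 \<Rightarrow> real" where
  "semiperimeter A B C = (dist B C + dist C A + dist A B) / 2"

definition equilateral :: "real^2 \<Rightarrow> real^2 \<Rightarrow> real^2 \<Rightarrow> bool" where
  "equilateral A B C \<longleftrightarrow> dist A B = dist B C \<and> dist B C = dist C A"

end

theory Submission
  imports Defs
begin

lemma dist2: "(dist (x::real^2) y)^2 = (x$1-y$1)^2 + (x$2-y$2)^2"
  unfolding dist_norm norm_vec_def L2_set_def sum_2 by simp

lemma circ_unique:
  fixes A B C P :: "real^2"
  defines "u1 \<equiv> B$1 - A$1" and "u2 \<equiv> B$2 - A$2" and "w1 \<equiv> C$1 - A$1" and "w2 \<equiv> C$2 - A$2"
  defines "D \<equiv> u1*w2 - u2*w1"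
  assumes D: "D \<noteq> 0"
  assumes h: "dist P A = dist P B" "dist P B = dist P C"
  shows "P = A + vector [(w2*(u1^2+u2^2) - u2*(w1^2+w2^2))/(2*D), (u1*(w1^2+w2^2) - w1*(u1^2+u2^2))/(2*D)]"
proof -
  have e1: "(dist P A)^2 = (dist P B)^2" "(dist P A)^2 = (dist P C)^2" using h by auto
  have E1: "2*(P$1-A$1)*u1 + 2*(P$2-A$2)*u2 = u1^2+u2^2"
    using e1(1) unfolding dist2 u1_def u2_def by (simp add: power2_eq_square algebra_simps)
  have E2: "2*(P$1-A$1)*w1 + 2*(P$2-A$2)*w2 = w1^2+w2^2"
    using e1(2) unfolding dist2 w1_def w2_def by (simp add: power2_eq_square algebra_simps)
  have x: "(P$1-A$1)*(2*D) = w2*(u1^2+u2^2) - u2*(w1^2+w2^2)"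
    using E1 E2 unfolding D_def by algebra
  have y: "(P$2-A$2)*(2*D) = u1*(w1^2+w2^2) - w1*(u1^2+u2^2)"
    using E1 E2 unfolding D_def by algebra
  have x'': "P$1 - A$1 = (w2*(u1^2+u2^2) - u2*(w1^2+w2^2))/(2*D)"
    using x D by (simp add: eq_divide_eq)
  have y'': "P$2 - A$2 = (u1*(w1^2+w2^2) - w1*(u1^2+u2^2))/(2*D)"
    using y D by (simp add: eq_divide_eq)
  have x': "P$1 = A$1 + (w2*(u1^2+u2^2) - u2*(w1^2+w2^2))/(2*D)" using x'' by linarith
  have y': "P$2 = A$2 + (u1*(w1^2+w2^2) - w1*(u1^2+u2^2))/(2*D)" using y'' by linarith
  show ?thesis using x' y' by (simp add: vec_eq_iff forall_2)
qed

lemma circ_exists: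
  fixes A B C :: "real^2"
  defines "u1 \<equiv> B$1 - A$1" and "u2 \<equiv> B$2 - A$2" and "w1 \<equiv> C$1 - A$1" and "w2 \<equiv> C$2 - A$2"
  defines "D \<equiv> u1*w2 - u2*w1"
  defines "P \<equiv> A + vector [(w2*(u1^2+u2^2) - u2*(w1^2+w2^2))/(2*D), (u1*(w1^2+w2^2) - w1*(u1^2+u2^2))/(2*D)]"
  assumes D: "D \<noteq> 0"
  shows "dist P A = dist P B" "dist P B = dist P C"
    "(dist P A)^2 * (4*D^2) = (u1^2+u2^2)*(w1^2+w2^2)*((w1-u1)^2+(w2-u2)^2)"
proof -
  define q1 where "q1 = (w2*(u1^2+u2^2) - u2*(w1^2+w2^2))/(2*D)"
  define q2 where "q2 = (u1*(w1^2+w2^2) - w1*(u1^2+u2^2))/(2*D)"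
  have q1: "q1 * (2*D) = w2*(u1^2+u2^2) - u2*(w1^2+w2^2)" using D unfolding q1_def by simp
  have q2: "q2 * (2*D) = u1*(w1^2+w2^2) - w1*(u1^2+u2^2)" using D unfolding q2_def by simp
  have PA: "(dist P A)^2 = q1^2+q2^2" unfolding dist2 P_def q1_def q2_def by simp
  have PB: "(dist P B)^2 = (q1-u1)^2+(q2-u2)^2" unfolding dist2 P_def q1_def q2_def u1_def u2_def by (simp add: algebra_simps)
  have PC: "(dist P C)^2 = (q1-w1)^2+(q2-w2)^2" unfolding dist2 P_def q1_def q2_def w1_def w2_def by (simp add: algebra_simps)
  have a: "2*q1*u1 + 2*q2*u2 = u1^2+u2^2"
  proof -
    have "(2*q1*u1 + 2*q2*u2)*D = (u1^2+u2^2)*D" using q1 q2 unfolding D_def by algebra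
    thus ?thesis using D by simp
  qed
  have b: "2*q1*w1 + 2*q2*w2 = w1^2+w2^2"
  proof -
    have "(2*q1*w1 + 2*q2*w2)*D = (w1^2+w2^2)*D" using q1 q2 unfolding D_def by algebra
    thus ?thesis using D by simp
  qed
  have "(dist P A)^2 = (dist P B)^2" using PA PB a by (simp add: power2_eq_square algebra_simps)
  thus "dist P A = dist P B" by simp
  have "(dist P B)^2 = (dist P C)^2" using PA PB PC a b by (simp add: power2_eq_square algebra_simps)
  thus "dist P B = dist P C" by simp
  show "(dist P A)^2 * (4*D^2) = (u1^2+u2^2)*(w1^2+w2^2)*((w1-u1)^2+(w2-u2)^2)"
    unfolding PA using q1 q2 unfolding D_def by algebra
qed

lemma infdist_line:
  fixes X B C :: "real^2"
  defines "e1 \<equiv> C$1 - B$1" and "e2 \<equiv> C$2 - B$2" and "x1 \<equiv> X$1 - B$1" and "x2 \<equiv> X$2 - B$2"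
  assumes L: "e1^2 + e2^2 > 0"
  shows "infdist X (affine hull {B, C}) = \<bar>x1*e2 - x2*e1\<bar> / sqrt (e1^2+e2^2)"
proof -
  define k where "k = x1*e2 - x2*e1"
  define L2 where "L2 = e1^2+e2^2"
  have L2: "L2 > 0" using L unfolding L2_def .
  have dQ: "(dist X ((1-v) *\<^sub>R B + v *\<^sub>R C))^2 = (x1 - v * e1)^2 + (x2 - v * e2)^2" for v
    unfolding dist2 x1_def x2_def e1_def e2_def by (simp add: algebra_simps)
  have nn: "0 \<le> \<bar>k\<bar> / sqrt L2" using L2 by simp
  have lb: "\<bar>k\<bar> / sqrt L2 \<le> dist X ((1-v) *\<^sub>R B + v *\<^sub>R C)" for v
  proof -
    have id: "((x1-v * e1)^2+(x2-v * e2)^2)*L2 = ((x1-v * e1)*e1+(x2-v * e2)*e2)^2 + k^2"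
      unfolding L2_def k_def by algebra
    have "k^2 \<le> ((x1-v * e1)^2+(x2-v * e2)^2)*L2" using id by simp
    hence "k^2 / L2 \<le> (x1-v * e1)^2+(x2-v * e2)^2" using L2 by (simp add: divide_le_eq)
    hence "(\<bar>k\<bar> / sqrt L2)^2 \<le> (dist X ((1-v) *\<^sub>R B + v *\<^sub>R C))^2"
      using L2 dQ by (simp add: power_divide)
    thus ?thesis using power2_le_imp_le by (metis zero_le_dist)
  qed
  define v0 where "v0 = (x1*e1+x2*e2)/L2"
  have ach: "dist X ((1-v0) *\<^sub>R B + v0 *\<^sub>R C) = \<bar>k\<bar> / sqrt L2"
  proof -
    have v0: "v0 * L2 = x1*e1+x2*e2" using L2 unfolding v0_def by simp
    have id: "((x1-v0 * e1)^2+(x2-v0 * e2)^2)*L2 = ((x1-v0 * e1)*e1+(x2-v0 * e2)*e2)^2 + k^2"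
      unfolding L2_def k_def by algebra
    have z: "(x1-v0 * e1)*e1+(x2-v0 * e2)*e2 = 0" using v0 unfolding L2_def by algebra
    have "(x1-v0 * e1)^2+(x2-v0 * e2)^2 = k^2/L2" using id z L2 by (simp add: eq_divide_eq)
    hence "(dist X ((1-v0) *\<^sub>R B + v0 *\<^sub>R C))^2 = (\<bar>k\<bar> / sqrt L2)^2"
      using dQ L2 by (simp add: power_divide)
    thus ?thesis using nn by (metis power2_eq_imp_eq zero_le_dist)
  qed
  have mem: "(1-v) *\<^sub>R B + v *\<^sub>R C \<in> affine hull {B, C}" for v
    unfolding affine_hull_2 by force
  have memD: "\<exists>v. Q = (1-v) *\<^sub>R B + v *\<^sub>R C" if "Q \<in> affine hull {B, C}" for Q
  proof -
    from that obtain u v where "Q = u *\<^sub>R B + v *\<^sub>R C" "u + v = 1" unfolding affine_hull_2 by blast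
    thus ?thesis by (intro exI[of _ v]) (simp add: algebra_simps \<open>u + v = 1\<close>[symmetric])
  qed
  have "infdist X (affine hull {B, C}) \<le> \<bar>k\<bar> / sqrt L2"
    using infdist_le[OF mem[of v0], of X] ach by simp
  moreover have "\<bar>k\<bar> / sqrt L2 \<le> infdist X (affine hull {B, C})"
  proof -
    have ne: "affine hull {B, C} \<noteq> {}" using mem by blast
    show ?thesis unfolding infdist_notempty[OF ne]
      by (rule cINF_greatest[OF ne]) (use memD lb in blast)
  qed
  ultimately show ?thesis unfolding k_def L2_def by simp
qed

lemma noncol:
  fixes A B C :: "real^2"
  assumes "\<not> collinear {A, B, C}"
  shows "(B$1 - A$1)*(C$2 - A$2) - (B$2 - A$2)*(C$1 - A$1) \<noteq> 0"
proof
  assume h: "(B$1 - A$1)*(C$2 - A$2) - (B$2 - A$2)*(C$1 - A$1) = 0"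
  define x where "x = A - B"
  define y where "y = C - B"
  have k: "x$1*y$2 - x$2*y$1 = 0" using h unfolding x_def y_def by (simp add: algebra_simps)
  have "collinear {0, x, y}"
  proof (cases "x = 0")
    case True thus ?thesis by (simp add: collinear_lemma)
  next
    case False
    hence n: "x$1^2 + x$2^2 \<noteq> 0" by (simp add: vec_eq_iff forall_2)
    define c where "c = (x$1*y$1+x$2*y$2)/(x$1^2 + x$2^2)"
    have "y$1 = c * x$1" unfolding c_def using n k by (simp add: eq_divide_eq field_simps) algebra
    moreover have "y$2 = c * x$2" unfolding c_def using n k by (simp add: eq_divide_eq field_simps) algebra
    ultimately have "y = c *\<^sub>R x" by (simp add: vec_eq_iff forall_2)
    thus ?thesis by (auto simp: collinear_lemma)
  qed
  hence "collinear {A, B, C}" unfolding x_def y_def by (subst collinear_3) auto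
  with assms show False by simp
qed

lemma scal:
  fixes a b c R r p S :: real
  assumes pos: "a > 0" "b > 0" "c > 0" and p: "p = a+b+c" and S: "S = p/2"
    and e3: "a * b * c = 2 * R * r * p"
    and her: "4 * r^2 * p^2 = p * (-a+b+c) * (a-b+c) * (a+b-c)"
  shows "a^2+b^2+c^2 = 2 * S^2 - 2 * r^2 - 8 * R * r"
    "(a * (3 * R^2 - (c^2+b^2)/2) + b * (3 * R^2 - (c^2+a^2)/2) + c * (3 * R^2 - (b^2+a^2)/2)) / (3 * p)  *  6
      = 6 * R^2 - S^2 - r^2 + 2 * R * r"
    "(R^2 * (a^2+b^2+c^2) + 2 * a * b * (R^2-c^2/2) + 2 * b * c * (R^2-a^2/2) + 2 * c * a * (R^2-b^2/2)) / p^2 = R^2 - 2 * R * r"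
proof -
  have pp: "p > 0" using pos p by simp
  have h2: "4 * r^2 * p = (-a+b+c) * (a-b+c) * (a+b-c)"
  proof -
    have "p * (4 * r^2 * p) = p * ((-a+b+c) * (a-b+c) * (a+b-c))" using her by (simp add: power2_eq_square algebra_simps)
    thus ?thesis using pp by simp
  qed
  have e2p: "p * (a * b+b * c+c * a) = p * (S^2 + r^2 + 4 * R * r)"
    using h2 e3 p S by algebra
  have e2: "a * b+b * c+c * a = S^2 + r^2 + 4 * R * r" using e2p pp by simp
  show "a^2+b^2+c^2 = 2 * S^2 - 2 * r^2 - 8 * R * r" using e2 p S by algebra
  show "(a * (3 * R^2 - (c^2+b^2)/2) + b * (3 * R^2 - (c^2+a^2)/2) + c * (3 * R^2 - (b^2+a^2)/2)) / (3 * p)  *  6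
      = 6 * R^2 - S^2 - r^2 + 2 * R * r"
  proof -
    have "(a * (3 * R^2 - (c^2+b^2)/2) + b * (3 * R^2 - (c^2+a^2)/2) + c * (3 * R^2 - (b^2+a^2)/2))  *  6
       = (6 * R^2 - S^2 - r^2 + 2 * R * r)  *  (3 * p)"
      using e2 e3 p S by algebra
    thus ?thesis using pp by (simp add: divide_simps)
  qed
  show "(R^2 * (a^2+b^2+c^2) + 2 * a * b * (R^2-c^2/2) + 2 * b * c * (R^2-a^2/2) + 2 * c * a * (R^2-b^2/2)) / p^2 = R^2 - 2 * R * r"
  proof -
    have "(R^2 * (a^2+b^2+c^2) + 2 * a * b * (R^2-c^2/2) + 2 * b * c * (R^2-a^2/2) + 2 * c * a * (R^2-b^2/2))
       = (R^2 - 2 * R * r)  *  p^2"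
      using e3 p by algebra
    thus ?thesis using pp by (simp add: divide_simps)
  qed
qed

lemma cos_vangle: "cos (vangle x y) = inner x y / (norm x * norm y)"
proof -
  have "\<bar>inner x y / (norm x * norm y)\<bar> \<le> 1"
  proof (cases "norm x * norm y = 0")
    case True thus ?thesis by auto
  next
    case False
    hence "norm x * norm y > 0" by (simp add: less_le)
    thus ?thesis using Cauchy_Schwarz_ineq2[of x y] by (simp add: abs_div divide_le_eq)
  qed
  thus ?thesis unfolding vangle_def by (simp add: cos_arccos_abs)
qed

lemma norm_diff_sq: "(norm (x - y))^2 = (norm x)^2 + (norm y)^2 - 2 * inner x y"
  by (simp add: power2_norm_eq_inner inner_diff_left inner_diff_right inner_commute)

theorem mainTheorem6:
  fixes A B C :: "real^2"
  assumes "\<not> collinear {A, B, C}"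
    and "\<not> equilateral A B C"
  shows "(let s = semiperimeter A B C; R = circumradius A B C; r = inradius A B C;
              Oc = circumcenter A B C; G = centroid A B C; I = incenter A B C
          in cos (vangle (G - Oc) (I - Oc)) =
             (6 * R^2 - s^2 - r^2 + 2 * R * r) /
             (2 * sqrt (9 * R^2 - 2 * s^2 + 2 * r^2 + 8 * R * r) * sqrt (R^2 - 2 * R * r)))"
proof -
  define u1 where "u1 = B$1 - A$1"
  define u2 where "u2 = B$2 - A$2"
  define w1 where "w1 = C$1 - A$1"
  define w2 where "w2 = C$2 - A$2"
  define D where "D = u1 * w2 - u2 * w1"
  define P where "P = A + vector [(w2 * (u1^2+u2^2) - u2 * (w1^2+w2^2))/(2 * D), (u1 * (w1^2+w2^2) - w1 * (u1^2+u2^2))/(2 * D)]"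
  have D: "D \<noteq> 0" using noncol[OF assms(1)] unfolding D_def u1_def u2_def w1_def w2_def .
  note CE = circ_exists[where A=A and B=B and C=C, folded u1_def u2_def w1_def w2_def, folded D_def, folded P_def, OF D]
  note CU = circ_unique[where A=A and B=B and C=C, folded u1_def u2_def w1_def w2_def, folded D_def, folded P_def, OF D]
  have Oeq: "circumcenter A B C = P"
    unfolding circumcenter_def
  proof (rule the_equality)
    show "dist P A = dist P B \<and> dist P B = dist P C" using CE(1,2) by blast
  next
    fix Q assume "dist Q A = dist Q B \<and> dist Q B = dist Q C"
    thus "Q = P" using CU[of Q] by blast
  qed
  define R where "R = dist P A"
  define a where "a = dist B C"
  define b where "b = dist C A"
  define c where "c = dist A B"
  define p where "p = a + b + c"
  have a2: "a^2 = (w1-u1)^2+(w2-u2)^2" unfolding a_def dist2 u1_def u2_def w1_def w2_def by (simp add: power2_commute)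
  have b2: "b^2 = w1^2+w2^2" unfolding b_def dist2 w1_def w2_def by simp
  have c2: "c^2 = u1^2+u2^2" unfolding c_def dist2 u1_def u2_def by (simp add: power2_commute)
  have apos: "a > 0"
  proof -
    have "a \<noteq> 0"
    proof
      assume "a = 0"
      hence "w1 - u1 = 0 \<and> w2 - u2 = 0" using a2 by simp
      thus False using D unfolding D_def by (simp add: algebra_simps)
    qed
    thus ?thesis unfolding a_def by simp
  qed
  have bpos: "b > 0"
  proof -
    have "b \<noteq> 0"
    proof
      assume "b = 0"
      hence "w1 = 0 \<and> w2 = 0" using b2 by simp
      thus False using D unfolding D_def by simp
    qed
    thus ?thesis unfolding b_def by simp
  qed
  have cpos: "c > 0"
  proof -
    have "c \<noteq> 0"
    proof
      assume "c = 0"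
      hence "u1 = 0 \<and> u2 = 0" using c2 by simp
      thus False using D unfolding D_def by simp
    qed
    thus ?thesis unfolding c_def by simp
  qed
  have pp: "p > 0" unfolding p_def using apos bpos cpos by simp
  have R0: "R \<ge> 0" unfolding R_def by simp
  have RD: "R^2 * (4 * D^2) = c^2 * b^2 * a^2"
    using CE(3) unfolding R_def a2 b2 c2 by simp
  have e3a: "a * b * c = 2 * R * \<bar>D\<bar>"
  proof -
    have "(a * b * c)^2 = c^2 * b^2 * a^2" by (simp add: power_mult_distrib)
    moreover have "(2 * R * \<bar>D\<bar>)^2 = R^2 * (4 * D^2)" by (simp add: power_mult_distrib)
    ultimately have "(a * b * c)^2 = (2 * R * \<bar>D\<bar>)^2" using RD by linarith
    moreover have "0 \<le> a * b * c" using apos bpos cpos by simp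
    moreover have "0 \<le> 2 * R * \<bar>D\<bar>" using R0 by simp
    ultimately show ?thesis by (rule power2_eq_imp_eq)
  qed
  define I where "I = incenter A B C"
  have Icoord: "I$i * p = a * A$i + b * B$i + c * C$i" for i
    unfolding I_def incenter_def using pp by (simp add: a_def b_def c_def p_def)
  have L: "(C$1 - B$1)^2 + (C$2 - B$2)^2 = a^2"
    unfolding a2 u1_def u2_def w1_def w2_def by (simp add: algebra_simps)
  have kp: "((I$1 - B$1) * (C$2 - B$2) - (I$2 - B$2) * (C$1 - B$1)) * p = - a * D"
  proof -
    have x1: "(I$1 - B$1) * p = a * (A$1 - B$1) + c * (C$1 - B$1)"
      using Icoord[of 1] unfolding p_def by (simp add: algebra_simps)
    have x2: "(I$2 - B$2) * p = a * (A$2 - B$2) + c * (C$2 - B$2)"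
      using Icoord[of 2] unfolding p_def by (simp add: algebra_simps)
    show ?thesis using x1 x2 unfolding D_def u1_def u2_def w1_def w2_def by algebra
  qed
  have rdef: "inradius A B C = \<bar>D\<bar> / p"
  proof -
    have "inradius A B C = \<bar>(I$1 - B$1) * (C$2 - B$2) - (I$2 - B$2) * (C$1 - B$1)\<bar> / sqrt (a^2)"
      unfolding inradius_def I_def[symmetric] L[symmetric]
      by (rule infdist_line) (use L apos in simp)
    also have "\<dots> = \<bar>(I$1 - B$1) * (C$2 - B$2) - (I$2 - B$2) * (C$1 - B$1)\<bar> / a" using apos by simp
    also have "\<dots> = \<bar>D\<bar> / p"
    proof -
      have "\<bar>(I$1 - B$1) * (C$2 - B$2) - (I$2 - B$2) * (C$1 - B$1)\<bar> * p = a * \<bar>D\<bar>"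
        using kp pp apos by (metis abs_minus abs_mult abs_of_pos mult_minus_left)
      thus ?thesis using pp apos by (simp add: divide_simps)
    qed
    finally show ?thesis .
  qed
  define r where "r = inradius A B C"
  have Dr: "\<bar>D\<bar> = r * p" unfolding r_def rdef using pp by simp
  have e3: "a * b * c = 2 * R * r * p" using e3a Dr by simp
  have her: "4 * r^2 * p^2 = p * (-a+b+c) * (a-b+c) * (a+b-c)"
  proof -
    have "4 * D^2 = p * (-a+b+c) * (a-b+c) * (a+b-c)"
      using a2 b2 c2 unfolding p_def D_def by algebra
    moreover have "D^2 = (r * p)^2" using Dr by (metis power2_abs)
    ultimately show ?thesis by (simp add: power_mult_distrib)
  qed
  define S where "S = semiperimeter A B C"
  have S: "S = p / 2" unfolding S_def semiperimeter_def p_def a_def b_def c_def by simp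
  note SC = scal[OF apos bpos cpos p_def S e3 her]
  define uA where "uA = A - P"
  define uB where "uB = B - P"
  define uC where "uC = C - P"
  have dA: "norm (A - P) = R" unfolding R_def dist_norm by (simp add: norm_minus_commute)
  have dB: "norm (B - P) = R" using CE(1) unfolding R_def dist_norm by (simp add: norm_minus_commute)
  have dC: "norm (C - P) = R" using CE(1) CE(2) unfolding R_def dist_norm by (simp add: norm_minus_commute)
  have nA: "inner uA uA = R^2" unfolding uA_def by (simp add: power2_norm_eq_inner[symmetric] dA)
  have nB: "inner uB uB = R^2" unfolding uB_def by (simp add: power2_norm_eq_inner[symmetric] dB)
  have nC: "inner uC uC = R^2" unfolding uC_def by (simp add: power2_norm_eq_inner[symmetric] dC)
  have iAB: "inner uA uB = R^2 - c^2/2"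
  proof -
    have "c^2 = (norm (uA - uB))^2" unfolding c_def uA_def uB_def dist_norm by simp
    thus ?thesis using norm_diff_sq[of uA uB] dA dB unfolding uA_def uB_def by (simp add: field_simps)
  qed
  have iBC: "inner uB uC = R^2 - a^2/2"
  proof -
    have "a^2 = (norm (uB - uC))^2" unfolding a_def uB_def uC_def dist_norm by simp
    thus ?thesis using norm_diff_sq[of uB uC] dB dC unfolding uB_def uC_def by (simp add: field_simps)
  qed
  have iCA: "inner uC uA = R^2 - b^2/2"
  proof -
    have "b^2 = (norm (uC - uA))^2" unfolding b_def uA_def uC_def dist_norm by simp
    thus ?thesis using norm_diff_sq[of uC uA] dC dA unfolding uC_def uA_def by (simp add: field_simps)
  qed
  have iBA: "inner uB uA = R^2 - c^2/2" using iAB by (simp add: inner_commute)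
  have iCB: "inner uC uB = R^2 - a^2/2" using iBC by (simp add: inner_commute)
  have iAC: "inner uA uC = R^2 - b^2/2" using iCA by (simp add: inner_commute)
  have Gv: "centroid A B C - P = (1/3) *\<^sub>R (uA + uB + uC)"
    unfolding centroid_def uA_def uB_def uC_def by (simp add: vec_eq_iff forall_2 algebra_simps)
  have Iv: "I - P = (1/p) *\<^sub>R (a *\<^sub>R uA + b *\<^sub>R uB + c *\<^sub>R uC)"
  proof -
    have "(I - P)$i = ((1/p) *\<^sub>R (a *\<^sub>R uA + b *\<^sub>R uB + c *\<^sub>R uC))$i" for i
    proof -
      have "(I$i - P$i) * p = a * (A$i - P$i) + b * (B$i - P$i) + c * (C$i - P$i)"
        using Icoord[of i] unfolding p_def by (simp add: algebra_simps)
      hence "I$i - P$i = (a * (A$i - P$i) + b * (B$i - P$i) + c * (C$i - P$i)) / p"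
        using pp by (simp add: eq_divide_eq)
      thus ?thesis unfolding uA_def uB_def uC_def by simp
    qed
    thus ?thesis by (simp add: vec_eq_iff)
  qed
  have GI: "inner (centroid A B C - P) (I - P) * 6 = 6 * R^2 - S^2 - r^2 + 2 * R * r"
  proof -
    have "inner (centroid A B C - P) (I - P) =
      (a * (3 * R^2 - (c^2+b^2)/2) + b * (3 * R^2 - (c^2+a^2)/2) + c * (3 * R^2 - (b^2+a^2)/2)) / (3 * p)"
      unfolding Gv Iv using pp by (simp add: inner_add_left inner_add_right nA nB nC iAB iBC iCA iBA iCB iAC field_simps; simp add: algebra_simps)
    thus ?thesis using SC(2) by simp
  qed
  have GG: "9 * (norm (centroid A B C - P))^2 = 9 * R^2 - 2 * S^2 + 2 * r^2 + 8 * R * r"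
  proof -
    have "9 * (norm (centroid A B C - P))^2 = 9 * R^2 - (a^2+b^2+c^2)"
      unfolding Gv power2_norm_eq_inner
      by (simp add: inner_add_left inner_add_right nA nB nC iAB iBC iCA iBA iCB iAC field_simps; simp add: algebra_simps)
    thus ?thesis using SC(1) by simp
  qed
  have II: "(norm (I - P))^2 = R^2 - 2 * R * r"
  proof -
    have "(norm (I - P))^2 = (R^2 * (a^2+b^2+c^2) + 2 * a * b * (R^2-c^2/2) + 2 * b * c * (R^2-a^2/2) + 2 * c * a * (R^2-b^2/2)) / p^2"
      unfolding Iv power2_norm_eq_inner using pp
      by (simp add: inner_add_left inner_add_right nA nB nC iAB iBC iCA iBA iCB iAC field_simps; simp add: algebra_simps power2_eq_square)
    thus ?thesis using SC(3) by simp
  qed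
  have sq1: "sqrt (9 * R^2 - 2 * S^2 + 2 * r^2 + 8 * R * r) = 3 * norm (centroid A B C - P)"
    unfolding GG[symmetric] by (simp add: real_sqrt_mult)
  have sq2: "sqrt (R^2 - 2 * R * r) = norm (I - P)"
    unfolding II[symmetric] by simp
  have CR: "circumradius A B C = R" unfolding circumradius_def Oeq R_def ..
  have aux: "x * 6 / (2 * (3 * g) * i) = x / (g * i)" for x g i :: real
  proof -
    have "2 * (3 * g) * i = 6 * (g * i)" by simp
    thus ?thesis by simp
  qed
  show ?thesis
    unfolding Let_def Oeq CR r_def[symmetric] S_def[symmetric] I_def[symmetric] cos_vangle sq1 sq2 GI[symmetric]
    by (rule aux[symmetric])
qed

end
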